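(* Let $A=[1,1,\dots,1]\in\mathbb R^{1\times N}$, $\vec w\in\mathbb R^N$ with $\sum_{i=1}^N w_i>0$, $b=A\vec w$, and let $\vec x$ be the minimizer of $\frac12\|\vec x-\vec w\|_2^2$ over $\vec x\in\mathbb R^N$ subject to $A\vec x=b$ and $x_i\ge0$ for all $i$. If $w_{i_1}\ge w_{i_2}>0$, then $x_{i_1}=0$ implies $x_{i_2}=0$. *)

theory Defs
  imports "HOL-Analysis.Analysis"
begin

definition Aones :: "real ^ 'n \<Rightarrow> real" where
  "Aones x = (\<Sum>i\<in>UNIV. x $ i)"

definition feasible :: "real \<Rightarrow> (real ^ 'n) set" where
  "feasible b = {x. Aones x = b \<and> (\<forall>i. 0 \<le> x $ i)}"

definition is_minimizer :: "real ^ 'n \<Rightarrow> real ^ 'n \<Rightarrow> bool" where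
  "is_minimizer w x \<longleftrightarrow> x \<in> feasible (Aones w) \<and>
     (\<forall>y \<in> feasible (Aones w). (1/2) * (norm (x - w))\<^sup>2 \<le> (1/2) * (norm (y - w))\<^sup>2)"

end

theory Submission
  imports Defs
begin

lemma norm_sq_vec: "(norm (v::real^'n))\<^sup>2 = (\<Sum>i\<in>UNIV. (v $ i)\<^sup>2)"
  by (simp add: norm_eq_sqrt_inner inner_vec_def power2_eq_square sum_nonneg)

lemma sum_split2:
  fixes f :: "'n::finite \<Rightarrow> real"
  assumes "a \<noteq> b"
  shows "(\<Sum>i\<in>UNIV. f i) = f a + f b + (\<Sum>i\<in>UNIV - {a,b}. f i)"
proof -
  have "(\<Sum>i\<in>UNIV. f i) = (\<Sum>i\<in>{a,b}. f i) + (\<Sum>i\<in>UNIV - {a,b}. f i)"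
    by (metis add.commute finite sum.subset_diff top_greatest)
  thus ?thesis using assms by simp
qed

theorem lemma4:
  fixes w x :: "real ^ 'n" and i1 i2 :: 'n
  assumes "Aones w > 0"
    and "is_minimizer w x"
    and "w $ i1 \<ge> w $ i2" and "w $ i2 > 0"
    and "x $ i1 = 0"
  shows "x $ i2 = 0"
proof (rule ccontr)
  assume ne: "x $ i2 \<noteq> 0"
  have xf: "x \<in> feasible (Aones w)" and opt: "\<forall>y \<in> feasible (Aones w). (1/2) * (norm (x - w))\<^sup>2 \<le> (1/2) * (norm (y - w))\<^sup>2"
    using assms(2) unfolding is_minimizer_def by auto
  have xs: "Aones x = Aones w" and xnn: "\<And>i. 0 \<le> x $ i" using xf unfolding feasible_def by auto
  have pos: "x $ i2 > 0" using xnn[of i2] ne by linarith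
  have d: "i1 \<noteq> i2" using ne assms(5) by auto
  define t where "t = x $ i2 / 2"
  have tp: "t > 0" "t < x $ i2" using pos t_def by auto
  define y :: "real ^ 'n" where "y = (\<chi> j. if j = i1 then x $ j + t else if j = i2 then x $ j - t else x $ j)"
  have y1: "y $ i1 = x $ i1 + t" and y2: "y $ i2 = x $ i2 - t" and yo: "\<And>j. j \<noteq> i1 \<Longrightarrow> j \<noteq> i2 \<Longrightarrow> y $ j = x $ j"
    using d by (auto simp: y_def)
  have rest: "(\<Sum>i\<in>UNIV - {i1,i2}. f (y $ i) i) = (\<Sum>i\<in>UNIV - {i1,i2}. f (x $ i) i)" for f :: "real \<Rightarrow> 'n \<Rightarrow> real"
    by (rule sum.cong) (auto simp: yo)
  have "Aones y = Aones x"
    unfolding Aones_def using sum_split2[OF d, of "\<lambda>i. y $ i"] sum_split2[OF d, of "\<lambda>i. x $ i"]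
      rest[of "\<lambda>v i. v"] y1 y2 by simp
  moreover have "0 \<le> y $ i" for i
    using xnn[of i] tp y1 y2 yo[of i] by (cases "i = i1"; cases "i = i2") auto
  ultimately have "y \<in> feasible (Aones w)" using xs unfolding feasible_def by auto
  hence le: "(norm (x - w))\<^sup>2 \<le> (norm (y - w))\<^sup>2" using opt by auto
  have "(norm (y - w))\<^sup>2 = (y$i1 - w$i1)\<^sup>2 + (y$i2 - w$i2)\<^sup>2 + (\<Sum>i\<in>UNIV - {i1,i2}. (x $ i - w $ i)\<^sup>2)"
    unfolding norm_sq_vec using sum_split2[OF d, of "\<lambda>i. ((y - w) $ i)\<^sup>2"] rest[of "\<lambda>v i. (v - w $ i)\<^sup>2"] by simp
  moreover have "(norm (x - w))\<^sup>2 = (x$i1 - w$i1)\<^sup>2 + (x$i2 - w$i2)\<^sup>2 + (\<Sum>i\<in>UNIV - {i1,i2}. (x $ i - w $ i)\<^sup>2)"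
    unfolding norm_sq_vec using sum_split2[OF d, of "\<lambda>i. ((x - w) $ i)\<^sup>2"] by simp
  ultimately have "(x$i1 - w$i1)\<^sup>2 + (x$i2 - w$i2)\<^sup>2 \<le> (x$i1 + t - w$i1)\<^sup>2 + (x$i2 - t - w$i2)\<^sup>2"
    using le y1 y2 by simp
  hence "0 \<le> 2*t*(t - x$i2 - (w$i1 - w$i2))" using assms(5) by (simp add: power2_eq_square algebra_simps)
  moreover have "2*t*(t - x$i2 - (w$i1 - w$i2)) < 0"
    using tp assms(3) by (intro mult_pos_neg) auto
  ultimately show False by linarith
qed

end
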